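(* Let $R$ be a unital ring, and let $S\subseteq R$ be a subring with $1\in S$ such that $S$ is generated by its commutators (so that $\xi(S)$ is defined). Then $\xi(R)\leq 15\,\xi(S)^3$; that is, every element of $R$ is a sum of $15\,\xi(S)^3$ elements of the form $[b,c][d,e]$ with $b,c,d,e\in R$.
   Context: $[x,y]=xy-yx$. For a unital ring $T$ generated by its commutators (as an ideal, equivalently as a ring), $\xi(T)$ is the minimal $N\in\mathbb{N}$ such that every element of $T$ is a sum of $N$ elements of the form $[b,c][d,e]$ with $b,c,d,e\in T$. *)

theory Defs
  imports Main
begin

definition comm :: "'a::ring_1 \<Rightarrow> 'a \<Rightarrow> 'a" where
  "comm x y = x * y - y * x"

definition unital_subring :: "'a::ring_1 set \<Rightarrow> bool" where
  "unital_subring S \<longleftrightarrow> 0 \<in> S \<and> 1 \<in> S \<and>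
     (\<forall>x\<in>S. \<forall>y\<in>S. x + y \<in> S \<and> x * y \<in> S) \<and> (\<forall>x\<in>S. - x \<in> S)"

definition commutator_ideal :: "'a::ring_1 set \<Rightarrow> 'a set" where
  "commutator_ideal S = {\<Sum>i<n. x i * comm (a i) (b i) * y i | (n::nat) x a b y.
       \<forall>i<n. x i \<in> S \<and> a i \<in> S \<and> b i \<in> S \<and> y i \<in> S}"

definition generated_by_commutators :: "'a::ring_1 set \<Rightarrow> bool" where
  "generated_by_commutators S \<longleftrightarrow> commutator_ideal S = S"

definition sum_of_comm_products :: "'a::ring_1 set \<Rightarrow> nat \<Rightarrow> bool" where
  "sum_of_comm_products S N \<longleftrightarrow> (\<forall>z\<in>S. \<exists>b c d e :: nat \<Rightarrow> 'a.
      (\<forall>i<N. b i \<in> S \<and> c i \<in> S \<and> d i \<in> S \<and> e i \<in> S) \<and>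
      z = (\<Sum>i<N. comm (b i) (c i) * comm (d i) (e i)))"

definition xi :: "'a::ring_1 set \<Rightarrow> nat" where
  "xi S = (LEAST N. sum_of_comm_products S N)"

end

theory Submission
  imports Defs
begin

definition PS :: "'a::ring_1 set \<Rightarrow> nat \<Rightarrow> 'a \<Rightarrow> bool" where
  "PS A N z \<longleftrightarrow> (\<exists>b c d e :: nat \<Rightarrow> 'a. (\<forall>i<N. b i \<in> A \<and> c i \<in> A \<and> d i \<in> A \<and> e i \<in> A) \<and>
      z = (\<Sum>i<N. comm (b i) (c i) * comm (d i) (e i)))"

lemma soc_PS: "sum_of_comm_products A N \<longleftrightarrow> (\<forall>z\<in>A. PS A N z)"
  by (simp add: sum_of_comm_products_def PS_def)

lemma PS_zero: "PS A 0 0"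
  unfolding PS_def by auto

lemma PS_one: "x \<in> A \<Longrightarrow> y \<in> A \<Longrightarrow> z \<in> A \<Longrightarrow> w \<in> A \<Longrightarrow> PS A 1 (comm x y * comm z w)"
  unfolding PS_def
  by (rule exI[of _ "\<lambda>_. x"], rule exI[of _ "\<lambda>_. y"], rule exI[of _ "\<lambda>_. z"], rule exI[of _ "\<lambda>_. w"]) simp

lemma comm_swap: "comm y x = - comm x y"
  by (simp add: comm_def)

lemma PS_neg: assumes "PS A N z" shows "PS A N (- z)"
proof -
  from assms obtain b c d e where h: "\<forall>i<N. b i \<in> A \<and> c i \<in> A \<and> d i \<in> A \<and> e i \<in> A"
    and z: "z = (\<Sum>i<N. comm (b i) (c i) * comm (d i) (e i))" unfolding PS_def by blast
  have "- z = (\<Sum>i<N. comm (c i) (b i) * comm (d i) (e i))"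
    unfolding z sum_negf[symmetric] by (rule sum.cong) (simp_all add: comm_def algebra_simps)
  then show ?thesis unfolding PS_def using h by blast
qed

lemma sum_lessThan_add_split:
  fixes f :: "nat \<Rightarrow> 'b::comm_monoid_add"
  shows "(\<Sum>i<N+M. f i) = (\<Sum>i<N. f i) + (\<Sum>i<M. f (N+i))"
  by (induction M) (simp_all add: add.assoc)

lemma PS_add: assumes "PS A N z" "PS A M z'" shows "PS A (N+M) (z + z')"
proof -
  from assms(1) obtain b c d e where h: "\<forall>i<N. b i \<in> A \<and> c i \<in> A \<and> d i \<in> A \<and> e i \<in> A"
    and z: "z = (\<Sum>i<N. comm (b i) (c i) * comm (d i) (e i))" unfolding PS_def by blast
  from assms(2) obtain b' c' d' e' where h': "\<forall>i<M. b' i \<in> A \<and> c' i \<in> A \<and> d' i \<in> A \<and> e' i \<in> A"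
    and z': "z' = (\<Sum>i<M. comm (b' i) (c' i) * comm (d' i) (e' i))" unfolding PS_def by blast
  define B where "B i = (if i < N then b i else b' (i - N))" for i
  define C where "C i = (if i < N then c i else c' (i - N))" for i
  define D where "D i = (if i < N then d i else d' (i - N))" for i
  define E where "E i = (if i < N then e i else e' (i - N))" for i
  have "(\<Sum>i<N+M. comm (B i) (C i) * comm (D i) (E i)) =
        (\<Sum>i<N. comm (B i) (C i) * comm (D i) (E i)) + (\<Sum>i<M. comm (B (N+i)) (C (N+i)) * comm (D (N+i)) (E (N+i)))"
    by (rule sum_lessThan_add_split)
  also have "(\<Sum>i<N. comm (B i) (C i) * comm (D i) (E i)) = z"
    unfolding z by (rule sum.cong) (auto simp: B_def C_def D_def E_def)
  also have "(\<Sum>i<M. comm (B (N+i)) (C (N+i)) * comm (D (N+i)) (E (N+i))) = z'"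
    unfolding z' by (rule sum.cong) (auto simp: B_def C_def D_def E_def)
  finally have eq: "z + z' = (\<Sum>i<N+M. comm (B i) (C i) * comm (D i) (E i))" by simp
  have "\<forall>i<N+M. B i \<in> A \<and> C i \<in> A \<and> D i \<in> A \<and> E i \<in> A"
    using h h' by (auto simp: B_def C_def D_def E_def)
  with eq show ?thesis unfolding PS_def by blast
qed

lemma PS_zeros: "0 \<in> A \<Longrightarrow> PS A k 0"
  unfolding PS_def
  by (rule exI[of _ "\<lambda>_. 0"], rule exI[of _ "\<lambda>_. 0"], rule exI[of _ "\<lambda>_. 0"], rule exI[of _ "\<lambda>_. 0"])
     (simp add: comm_def)

lemma PS_mono: assumes "PS A N z" "N \<le> M" "0 \<in> A" shows "PS A M z"
proof -
  have "PS A (N + (M - N)) (z + 0)" by (rule PS_add[OF assms(1) PS_zeros[OF assms(3)]])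
  then show ?thesis using assms(2) by simp
qed

lemma PS_diff: "PS A N z \<Longrightarrow> PS A M z' \<Longrightarrow> PS A (N+M) (z - z')"
  using PS_add[of A N z M "- z'"] PS_neg[of A M z'] by simp

lemma PS_sum: "(\<And>i. i < n \<Longrightarrow> PS A N (f i)) \<Longrightarrow> PS A (n*N) (\<Sum>i<n. f i)"
proof (induction n)
  case 0 then show ?case by (simp add: PS_zero)
next
  case (Suc n)
  have "PS A (n*N + N) ((\<Sum>i<n. f i) + f n)"
    by (rule PS_add) (use Suc in auto)
  then show ?case by (simp add: add.commute)
qed

lemma ident_X:
  fixes u A B d r :: "'a::ring_1"
  shows "u * comm d (A*B) * r = comm (u*d*A*B + u*B*d*A) r - u * comm A (B*d*r)
     - comm (u*d*A) r * B - comm (u*B*d) r * A - u * comm B (d*A*r)"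
  by (simp add: comm_def algebra_simps)

lemma ident_X2:
  fixes u A B d r :: "'a::ring_1"
  shows "u * comm d (A*B) * r = comm (u*d*A*B + u*B*d*A) r - (u * comm A (B*d*r)
     + comm (u*d*A) r * B + comm (u*B*d) r * A + u * comm B (d*A*r))"
  by (simp add: comm_def algebra_simps)

lemma ident_conv:
  fixes u x y d e :: "'a::ring_1"
  shows "x*u*comm d e*y - y*u*comm d e*x = u*comm (d*y) (e*x) - u*comm (d*x) (e*y) + u*comm (d*e*x) y
     - u*comm (d*e*y) x + u*comm d (x*e*y - e*x*y - y*e*x + e*y*x) - comm u x * comm d (e*y)
     + comm (u*e) x * comm d y + comm u y * comm d (e*x) - comm (u*e) y * comm d x"
  by (simp add: comm_def algebra_simps)

lemma ident_I1:
  fixes x b y z :: "'a::ring_1"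
  shows "comm x b * comm y b * z = comm x b * comm y (b*z) - comm x (b*b) * comm y z + comm (b*x) b * comm y z"
  by (simp add: comm_def algebra_simps)

lemma ident_R:
  fixes X Y Z a b :: "'a::ring_1"
  shows "X * comm a b * Y * comm a b * Z = comm (X*a) b * comm (Y*a) b * Z - comm (X*a) b * comm Y b * (a*Z)
     - comm X b * comm (a*Y*a) b * Z + comm X b * comm (a*Y) b * (a*Z)"
  by (simp add: comm_def algebra_simps)

lemma us_0: "unital_subring S \<Longrightarrow> 0 \<in> S" by (simp add: unital_subring_def)
lemma us_1: "unital_subring S \<Longrightarrow> 1 \<in> S" by (simp add: unital_subring_def)
lemma us_add: "unital_subring S \<Longrightarrow> x \<in> S \<Longrightarrow> y \<in> S \<Longrightarrow> x + y \<in> S" by (simp add: unital_subring_def)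
lemma us_mult: "unital_subring S \<Longrightarrow> x \<in> S \<Longrightarrow> y \<in> S \<Longrightarrow> x * y \<in> S" by (simp add: unital_subring_def)
lemma us_neg: "unital_subring S \<Longrightarrow> x \<in> S \<Longrightarrow> - x \<in> S" by (simp add: unital_subring_def)
lemma us_diff: "unital_subring S \<Longrightarrow> x \<in> S \<Longrightarrow> y \<in> S \<Longrightarrow> x - y \<in> S"
  using us_add[of S x "- y"] us_neg[of S y] by simp
lemma us_comm: "unital_subring S \<Longrightarrow> x \<in> S \<Longrightarrow> y \<in> S \<Longrightarrow> comm x y \<in> S"
  unfolding comm_def by (intro us_diff us_mult)
lemma us_pow: "unital_subring S \<Longrightarrow> x \<in> S \<Longrightarrow> x ^ k \<in> S"
  by (induction k) (simp_all add: us_1 us_mult)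
lemma us_sum: "unital_subring S \<Longrightarrow> (\<And>i. i < (k::nat) \<Longrightarrow> f i \<in> S) \<Longrightarrow> (\<Sum>i<k. f i) \<in> S"
  by (induction k) (simp_all add: us_0 us_add)

lemma PS_one_S: "unital_subring S \<Longrightarrow> x \<in> S \<Longrightarrow> y \<in> S \<Longrightarrow> z \<in> S \<Longrightarrow> w \<in> S \<Longrightarrow> PS S 1 (comm x y * comm z w)"
  by (rule PS_one)

lemma PS_I1:
  assumes S: "unital_subring S" and h: "x \<in> S" "b \<in> S" "y \<in> S" "z \<in> S"
  shows "PS S 3 (comm x b * comm y b * z)"
proof -
  have "PS S (1+1+1) (comm x b * comm y (b*z) - comm x (b*b) * comm y z + comm (b*x) b * comm y z)"
    by (intro PS_add PS_diff PS_one) (use S h in \<open>auto intro: us_mult\<close>)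
  then show ?thesis by (simp add: ident_I1[symmetric] eval_nat_numeral)
qed

lemma PS_R:
  assumes S: "unital_subring S" and h: "X \<in> S" "Y \<in> S" "Z \<in> S" "a \<in> S" "b \<in> S"
  shows "PS S 12 (X * comm a b * Y * comm a b * Z)"
proof -
  have "PS S (3+3+3+3) (comm (X*a) b * comm (Y*a) b * Z - comm (X*a) b * comm Y b * (a*Z)
     - comm X b * comm (a*Y*a) b * Z + comm X b * comm (a*Y) b * (a*Z))"
    by (intro PS_add PS_diff PS_I1[OF S]) (use S h in \<open>auto intro: us_mult\<close>)
  then show ?thesis by (simp add: ident_R[symmetric])
qed

lemma PS_conv:
  fixes x y b c d e :: "'a::ring_1"
  shows "PS UNIV 9 (x*comm b c*comm d e*y - y*comm b c*comm d e*x)"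
proof -
  let ?u = "comm b c"
  have "PS (UNIV::'a set) (1+1+1+1+1+1+1+1+1) (?u*comm (d*y) (e*x) - ?u*comm (d*x) (e*y) + ?u*comm (d*e*x) y
     - ?u*comm (d*e*y) x + ?u*comm d (x*e*y - e*x*y - y*e*x + e*y*x) - comm ?u x * comm d (e*y)
     + comm (?u*e) x * comm d y + comm ?u y * comm d (e*x) - comm (?u*e) y * comm d x)"
    by (intro PS_add PS_diff PS_one) auto
  then show ?thesis by (simp add: ident_conv[symmetric] eval_nat_numeral)
qed

lemma PS_Xterm:
  fixes b c p q s t d r :: "'a::ring_1"
  defines "u \<equiv> comm b c" and "A \<equiv> comm p q" and "B \<equiv> comm s t"
  shows "PS UNIV 4 (u * comm A (B*d*r) + comm (u*d*A) r * B + comm (u*B*d) r * A + u * comm B (d*A*r))"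
proof -
  have "PS (UNIV::'a set) (1+1+1+1) (u * comm A (B*d*r) + comm (u*d*A) r * B + comm (u*B*d) r * A + u * comm B (d*A*r))"
    unfolding u_def A_def B_def by (intro PS_add PS_one) auto
  then show ?thesis by (simp add: eval_nat_numeral)
qed

section \<open>Existence of a uniform bound\<close>

definition Kset :: "'a::ring_1 set \<Rightarrow> 'a set" where
  "Kset S = {z \<in> S. \<exists>N. \<forall>x\<in>S. \<forall>y\<in>S. PS S N (x*z*y)}"

lemma K_zero: "unital_subring S \<Longrightarrow> 0 \<in> Kset S"
  unfolding Kset_def using PS_zero by (auto simp: us_0)

lemma K_add:
  assumes S: "unital_subring S" and z: "z \<in> Kset S" and z': "z' \<in> Kset S"
  shows "z + z' \<in> Kset S"
proof -
  from z obtain N where zS: "z \<in> S" and N: "\<forall>x\<in>S. \<forall>y\<in>S. PS S N (x*z*y)" unfolding Kset_def by blast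
  from z' obtain N' where zS': "z' \<in> S" and N': "\<forall>x\<in>S. \<forall>y\<in>S. PS S N' (x*z'*y)" unfolding Kset_def by blast
  have "\<forall>x\<in>S. \<forall>y\<in>S. PS S (N+N') (x*(z+z')*y)"
  proof (intro ballI)
    fix x y assume "x \<in> S" "y \<in> S"
    then have "PS S (N+N') (x*z*y + x*z'*y)" using N N' by (intro PS_add) auto
    then show "PS S (N+N') (x*(z+z')*y)" by (simp add: algebra_simps)
  qed
  then show ?thesis unfolding Kset_def using zS zS' S us_add by blast
qed

lemma K_sum: "unital_subring S \<Longrightarrow> (\<And>i. i < (k::nat) \<Longrightarrow> f i \<in> Kset S) \<Longrightarrow> (\<Sum>i<k. f i) \<in> Kset S"
  by (induction k) (simp_all add: K_zero K_add)

lemma K_in: "z \<in> Kset S \<Longrightarrow> z \<in> S"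
  unfolding Kset_def by blast

lemma K_left:
  assumes S: "unital_subring S" and z: "z \<in> Kset S" and a: "a \<in> S"
  shows "a * z \<in> Kset S"
proof -
  from z obtain N where zS: "z \<in> S" and N: "\<forall>x\<in>S. \<forall>y\<in>S. PS S N (x*z*y)" unfolding Kset_def by blast
  have "\<forall>x\<in>S. \<forall>y\<in>S. PS S N (x*(a*z)*y)"
  proof (intro ballI)
    fix x y assume "x \<in> S" "y \<in> S"
    then have "PS S N ((x*a)*z*y)" using N a S us_mult by blast
    then show "PS S N (x*(a*z)*y)" by (simp add: mult.assoc)
  qed
  then show ?thesis unfolding Kset_def using zS a S us_mult by blast
qed

lemma K_right:
  assumes S: "unital_subring S" and z: "z \<in> Kset S" and a: "a \<in> S"
  shows "z * a \<in> Kset S"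
proof -
  from z obtain N where zS: "z \<in> S" and N: "\<forall>x\<in>S. \<forall>y\<in>S. PS S N (x*z*y)" unfolding Kset_def by blast
  have "\<forall>x\<in>S. \<forall>y\<in>S. PS S N (x*(z*a)*y)"
  proof (intro ballI)
    fix x y assume "x \<in> S" "y \<in> S"
    then have "PS S N (x*z*(a*y))" using N a S us_mult by blast
    then show "PS S N (x*(z*a)*y)" by (simp add: mult.assoc)
  qed
  then show ?thesis unfolding Kset_def using zS a S us_mult by blast
qed

lemma K_R:
  assumes S: "unital_subring S" and h: "a \<in> S" "b \<in> S" "w \<in> S"
  shows "comm a b * w * comm a b \<in> Kset S"
proof -
  have "\<forall>x\<in>S. \<forall>y\<in>S. PS S 12 (x*(comm a b * w * comm a b)*y)"
  proof (intro ballI)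
    fix x y assume "x \<in> S" "y \<in> S"
    then have "PS S 12 (x * comm a b * w * comm a b * y)" using PS_R[OF S] h by blast
    then show "PS S 12 (x*(comm a b * w * comm a b)*y)" by (simp add: mult.assoc)
  qed
  moreover have "comm a b * w * comm a b \<in> S" using S h by (intro us_mult us_comm) auto
  ultimately show ?thesis unfolding Kset_def by blast
qed

lemma K_w:
  assumes S: "unital_subring S" and h: "x0 \<in> S" "y0 \<in> S" "a \<in> S" "b \<in> S" "X \<in> S"
  shows "(x0 * comm a b * y0) * X * (x0 * comm a b * y0) \<in> Kset S"
proof -
  have "comm a b * (y0 * X * x0) * comm a b \<in> Kset S"
    using S h by (intro K_R) (auto intro: us_mult)
  then have "x0 * (comm a b * (y0 * X * x0) * comm a b) \<in> Kset S"
    using K_left[OF S _ h(1)] by blast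
  then have "x0 * (comm a b * (y0 * X * x0) * comm a b) * y0 \<in> Kset S"
    using K_right[OF S _ h(2)] by blast
  then show ?thesis by (simp add: mult.assoc)
qed

lemma K_expand:
  assumes S: "unital_subring S" and s: "s \<in> S" and w: "w \<in> S"
    and hw: "\<And>X. X \<in> S \<Longrightarrow> w * X * w \<in> Kset S"
  shows "\<exists>E\<in>Kset S. (s+w)^N = s^N + (\<Sum>i<N. s^i * w * s^(N - Suc i)) + E"
proof (induction N)
  case 0
  show ?case using K_zero[OF S] by (intro bexI[of _ 0]) simp_all
next
  case (Suc N)
  from Suc obtain E where E: "E \<in> Kset S" and eq: "(s+w)^N = s^N + (\<Sum>i<N. s^i * w * s^(N - Suc i)) + E"
    by blast
  define E' where "E' = E * (s+w) + (\<Sum>i<N. s^i * (w * s^(N - Suc i) * w))"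
  have E': "E' \<in> Kset S"
  proof -
    have "E * (s+w) \<in> Kset S" using K_right[OF S E us_add[OF S s w]] .
    moreover have "(\<Sum>i<N. s^i * (w * s^(N - Suc i) * w)) \<in> Kset S"
      by (rule K_sum[OF S], rule K_left[OF S], rule hw, rule us_pow[OF S s], rule us_pow[OF S s])
    ultimately show ?thesis unfolding E'_def by (rule K_add[OF S])
  qed
  have sumS: "(\<Sum>i<N. s^i * w * s^(N - Suc i)) * s = (\<Sum>i<N. s^i * w * s^(Suc N - Suc i))"
    unfolding sum_distrib_right
  proof (rule sum.cong)
    fix i assume "i \<in> {..<N}"
    then have "Suc N - Suc i = Suc (N - Suc i)" by auto
    then show "s^i * w * s^(N - Suc i) * s = s^i * w * s^(Suc N - Suc i)"
      by (simp add: mult.assoc power_Suc2 power_commutes)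
  qed simp
  have sumW: "(\<Sum>i<N. s^i * w * s^(N - Suc i)) * w = (\<Sum>i<N. s^i * (w * s^(N - Suc i) * w))"
    unfolding sum_distrib_right by (simp add: mult.assoc)
  have "(s+w)^Suc N = (s^N + (\<Sum>i<N. s^i * w * s^(N - Suc i)) + E) * (s + w)"
    by (simp only: power_Suc2 eq)
  also have "\<dots> = s^N*s + (s^N*w + (\<Sum>i<N. s^i * w * s^(N - Suc i)) * s) + ((\<Sum>i<N. s^i * w * s^(N - Suc i)) * w + E*(s+w))"
    by (simp add: algebra_simps)
  also have "\<dots> = s^Suc N + (\<Sum>i<Suc N. s^i * w * s^(Suc N - Suc i)) + E'"
    unfolding sumS sumW E'_def by (simp add: power_Suc2 power_commutes algebra_simps)
  finally show ?case using E' by blast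
qed

lemma K_double:
  assumes S: "unital_subring S" and s: "s \<in> S" and w: "w \<in> S"
    and hw: "\<And>X. X \<in> S \<Longrightarrow> w * X * w \<in> Kset S" and sM: "s^M \<in> Kset S"
  shows "(s+w)^(2*M) \<in> Kset S"
proof -
  obtain E where E: "E \<in> Kset S" and eq: "(s+w)^(2*M) = s^(2*M) + (\<Sum>i<2*M. s^i * w * s^(2*M - Suc i)) + E"
    using K_expand[OF S s w hw] by blast
  have t1: "s^(2*M) \<in> Kset S"
  proof -
    have "s^M * s^M \<in> Kset S" using K_right[OF S sM us_pow[OF S s]] .
    then show ?thesis by (simp add: mult_2 power_add)
  qed
  have t2: "(\<Sum>i<2*M. s^i * w * s^(2*M - Suc i)) \<in> Kset S"
  proof (rule K_sum[OF S])
    fix i assume i: "i < 2*M"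
    show "s^i * w * s^(2*M - Suc i) \<in> Kset S"
    proof (cases "M \<le> i")
      case True
      then have "s^i = s^M * s^(i - M)" by (simp add: power_add[symmetric])
      then have "s^i * w * s^(2*M - Suc i) = s^M * (s^(i - M) * w * s^(2*M - Suc i))" by (simp add: mult.assoc)
      moreover have "s^M * (s^(i - M) * w * s^(2*M - Suc i)) \<in> Kset S"
        using S s w by (intro K_right[OF S sM]) (auto intro: us_mult us_pow)
      ultimately show ?thesis by simp
    next
      case False
      then have "2*M - Suc i = (M - Suc i) + M" using i by auto
      then have "s^(2*M - Suc i) = s^(M - Suc i) * s^M" by (simp add: power_add)
      then have "s^i * w * s^(2*M - Suc i) = (s^i * w * s^(M - Suc i)) * s^M" by (simp add: mult.assoc)
      moreover have "(s^i * w * s^(M - Suc i)) * s^M \<in> Kset S"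
        using S s w by (intro K_left[OF S sM]) (auto intro: us_mult us_pow)
      ultimately show ?thesis by simp
    qed
  qed
  show ?thesis unfolding eq using t1 t2 E by (intro K_add[OF S]) auto
qed

lemma xi_exists:
  assumes S: "unital_subring S" and G: "generated_by_commutators S"
  shows "\<exists>N. sum_of_comm_products S N"
proof -
  have "1 \<in> commutator_ideal S" using G us_1[OF S] by (simp add: generated_by_commutators_def)
  then have "\<exists>(m::nat) x a b y. 1 = (\<Sum>i<m. x i * comm (a i) (b i) * y i) \<and> (\<forall>i<m. x i \<in> S \<and> a i \<in> S \<and> b i \<in> S \<and> y i \<in> S)"
    unfolding commutator_ideal_def mem_Collect_eq by blast
  then obtain m :: nat and x a b y where h: "\<forall>i<m. x i \<in> S \<and> a i \<in> S \<and> b i \<in> S \<and> y i \<in> S"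
    and one: "1 = (\<Sum>i<m. x i * comm (a i) (b i) * y i)"
    by blast
  define w where "w i = x i * comm (a i) (b i) * y i" for i
  have wS: "w i \<in> S" if "i < m" for i
    using h that S unfolding w_def by (auto intro!: us_mult us_comm)
  have hw: "w i * X * w i \<in> Kset S" if "i < m" "X \<in> S" for i X
    unfolding w_def using K_w[OF S] h that by blast
  have main: "k \<le> m \<Longrightarrow> \<exists>M. (\<Sum>i<k. w i)^M \<in> Kset S" for k
  proof (induction k)
    case 0
    show ?case using K_zero[OF S] by (intro exI[of _ 1]) simp
  next
    case (Suc k)
    then obtain M where M: "(\<Sum>i<k. w i)^M \<in> Kset S" by auto
    have sS: "(\<Sum>i<k. w i) \<in> S" using Suc.prems wS by (intro us_sum[OF S]) auto
    have "((\<Sum>i<k. w i) + w k)^(2*M) \<in> Kset S"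
      using Suc.prems by (intro K_double[OF S sS wS _ M] hw) auto
    then show ?case by (intro exI[of _ "2*M"]) simp
  qed
  obtain M where "(\<Sum>i<m. w i)^M \<in> Kset S" using main by blast
  then have "1 \<in> Kset S" using one unfolding w_def by simp
  then obtain N where N: "\<forall>x\<in>S. \<forall>y\<in>S. PS S N (x*1*y)" unfolding Kset_def by blast
  have "\<forall>z\<in>S. PS S N z"
  proof
    fix z assume "z \<in> S"
    then show "PS S N z" using N us_1[OF S] by force
  qed
  then show ?thesis by (auto simp: soc_PS)
qed

lemma comm_sum_right: "comm x (\<Sum>i<(k::nat). f i) = (\<Sum>i<k. comm x (f i))"
  unfolding comm_def by (simp add: sum_distrib_left sum_distrib_right sum_subtractf)

lemma comm_sum_left: "comm (\<Sum>i<(k::nat). f i) y = (\<Sum>i<k. comm (f i) y)"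
  unfolding comm_def by (simp add: sum_distrib_left sum_distrib_right sum_subtractf)

lemma bound_arith: "(n::nat)*9 + n*(n*4) \<le> 15 * n^3"
proof (cases "n = 0")
  case False
  then have n1: "1 \<le> n" by simp
  have a: "n*1*1 \<le> n*n*n" using n1 by (intro mult_le_mono) auto
  have b: "n*n*1 \<le> n*n*n" using n1 by (intro mult_le_mono) auto
  have c: "n*(n*4) = 4*(n*n)" by simp
  show ?thesis using a b unfolding power3_eq_cube c by linarith
qed simp

theorem main_bound:
  fixes S :: "'a::ring_1 set"
  assumes S: "unital_subring S" and soc: "sum_of_comm_products S n"
  shows "sum_of_comm_products (UNIV :: 'a set) (15 * n ^ 3)"
proof -
  have "PS S n 1" using soc us_1[OF S] by (simp add: soc_PS)
  then obtain b c d e where he: "\<forall>i<n. b i \<in> S \<and> c i \<in> S \<and> d i \<in> S \<and> e i \<in> S"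
    and one: "1 = (\<Sum>i<n. comm (b i) (c i) * comm (d i) (e i))" unfolding PS_def by blast
  have "\<forall>z\<in>S. \<exists>f :: (nat \<Rightarrow> 'a) \<times> (nat \<Rightarrow> 'a) \<times> (nat \<Rightarrow> 'a) \<times> (nat \<Rightarrow> 'a).
      z = (\<Sum>j<n. comm (fst f j) (fst (snd f) j) * comm (fst (snd (snd f)) j) (snd (snd (snd f)) j))"
  proof
    fix z assume "z \<in> S"
    then have "PS S n z" using soc by (simp add: soc_PS)
    then obtain p q s t where "z = (\<Sum>j<n. comm (p j) (q j) * comm (s j) (t j))" unfolding PS_def by blast
    then show "\<exists>f :: (nat \<Rightarrow> 'a) \<times> (nat \<Rightarrow> 'a) \<times> (nat \<Rightarrow> 'a) \<times> (nat \<Rightarrow> 'a).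
      z = (\<Sum>j<n. comm (fst f j) (fst (snd f) j) * comm (fst (snd (snd f)) j) (snd (snd (snd f)) j))"
      by (intro exI[of _ "(p, q, s, t)"]) simp
  qed
  from bchoice[OF this] obtain F where F: "\<forall>z\<in>S. z = (\<Sum>j<n. comm (fst (F z) j) (fst (snd (F z)) j) * comm (fst (snd (snd (F z))) j) (snd (snd (snd (F z))) j))"
    by blast
  define u where "u i = comm (b i) (c i)" for i
  define A where "A i j = comm (fst (F (e i)) j) (fst (snd (F (e i))) j)" for i j
  define B where "B i j = comm (fst (snd (snd (F (e i)))) j) (snd (snd (snd (F (e i)))) j)" for i j
  have erep: "e i = (\<Sum>j<n. A i j * B i j)" if "i < n" for i
    using F he that unfolding A_def B_def by blast
  have "\<forall>r::'a. PS (UNIV::'a set) (15 * n^3) r"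
  proof
    fix r :: 'a
    define M where "M = (\<Sum>i<n. \<Sum>j<n. u i * d i * A i j * B i j + u i * B i j * d i * A i j)"
    define Q where "Q i j = u i * comm (A i j) (B i j * d i * r) + comm (u i * d i * A i j) r * B i j
        + comm (u i * B i j * d i) r * A i j + u i * comm (B i j) (d i * A i j * r)" for i j
    have "r = 1 * r" by simp
    also have "\<dots> = (\<Sum>i<n. u i * comm (d i) (e i) * r)"
      unfolding one u_def by (simp add: sum_distrib_right)
    also have "\<dots> = (\<Sum>i<n. \<Sum>j<n. u i * comm (d i) (A i j * B i j) * r)"
    proof (rule sum.cong)
      fix i assume "i \<in> {..<n}"
      then have "comm (d i) (e i) = (\<Sum>j<n. comm (d i) (A i j * B i j))"
        using erep comm_sum_right by auto
      then show "u i * comm (d i) (e i) * r = (\<Sum>j<n. u i * comm (d i) (A i j * B i j) * r)"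
        by (simp add: sum_distrib_left sum_distrib_right)
    qed simp
    also have "\<dots> = (\<Sum>i<n. \<Sum>j<n. comm (u i * d i * A i j * B i j + u i * B i j * d i * A i j) r - Q i j)"
      unfolding Q_def by (intro sum.cong refl) (rule ident_X2)
    also have "\<dots> = comm M r - (\<Sum>i<n. \<Sum>j<n. Q i j)"
      unfolding M_def comm_sum_left by (simp add: sum_subtractf)
    finally have req: "r = comm M r - (\<Sum>i<n. \<Sum>j<n. Q i j)" .
    have PQ: "PS UNIV (n*(n*4)) (\<Sum>i<n. \<Sum>j<n. Q i j)"
      unfolding Q_def u_def A_def B_def by (intro PS_sum PS_Xterm)
    have "comm M r = M * 1 * r - r * 1 * M" by (simp add: comm_def)
    also have "\<dots> = (\<Sum>k<n. M * comm (b k) (c k) * comm (d k) (e k) * r - r * comm (b k) (c k) * comm (d k) (e k) * M)"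
      unfolding one by (simp add: sum_distrib_left sum_distrib_right sum_subtractf mult.assoc)
    finally have ceq: "comm M r = (\<Sum>k<n. M * comm (b k) (c k) * comm (d k) (e k) * r - r * comm (b k) (c k) * comm (d k) (e k) * M)" .
    have PC: "PS UNIV (n*9) (comm M r)"
      unfolding ceq by (intro PS_sum PS_conv)
    have "PS UNIV (n*9 + n*(n*4)) r"
      using PS_diff[OF PC PQ] req by simp
    then show "PS UNIV (15 * n^3) r"
      using PS_mono[OF _ bound_arith[of n], of UNIV r] by simp
  qed
  then show ?thesis by (simp add: soc_PS)
qed

theorem proposition5p12:
  fixes S :: "'a::ring_1 set"
  assumes "unital_subring S"
    and "generated_by_commutators S"
  shows "sum_of_comm_products (UNIV :: 'a set) (15 * xi S ^ 3)
         \<and> xi (UNIV :: 'a set) \<le> 15 * xi S ^ 3"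
proof -
  have "sum_of_comm_products S (xi S)"
    unfolding xi_def by (rule LeastI_ex[OF xi_exists[OF assms]])
  then have h: "sum_of_comm_products (UNIV :: 'a set) (15 * xi S ^ 3)"
    by (rule main_bound[OF assms(1)])
  moreover have "xi (UNIV :: 'a set) \<le> 15 * xi S ^ 3"
    unfolding xi_def[of "UNIV :: 'a set"] by (rule Least_le[where P="sum_of_comm_products (UNIV :: 'a set)", OF h])
  ultimately show ?thesis by blast
qed

end
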